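(* Let $m\ge2$. For every $P_0\in\mathfrak P$ and every neighborhood $\mathcal O\subseteq\mathbb R^{nm\times n}$ of $P_0$ there exist $P_1,P_2\in\mathcal O\cap\mathfrak P$ such that $\operatorname{rank}[E-\gamma P_1,\ E-\gamma P_2]=2n-1$; equivalently, $$\operatorname{span}(E-\gamma P_1)\cap\operatorname{span}(E-\gamma P_2)=\operatorname{span}(\mathbf 1_{nm}).$$
   Context: $n,m\ge1$ integers, $\gamma\in(0,1)$. $\mathfrak P$ is the set of matrices $P\in\mathbb R^{nm\times n}$ with nonnegative entries and rows summing to one (rows indexed by state-action pairs ordered as $(s_1,a_1),\dots,(s_n,a_1),(s_1,a_2),\dots,(s_n,a_m)$). $E=[I_n,\dots,I_n]^\top\in\mathbb R^{nm\times n}$. $\operatorname{span}(B)$ denotes the column span of $B$; $\mathbf 1_{nm}$ is the all-ones vector. *)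

theory Defs
  imports "HOL-Analysis.Analysis"
begin

text \<open>States are the finite type 's (n = CARD('s)), actions the finite type 'a
  (m = CARD('a)). Matrices in R^{nm x n} are real^'s^('s \<times> 'a): rows are indexed by
  state-action pairs (s,a), columns by states.\<close>

definition stoch_mats :: "(real^'s::finite^('s \<times> 'a::finite)) set" where
  "stoch_mats = {P. (\<forall>i j. 0 \<le> P $ i $ j) \<and> (\<forall>i. (\<Sum>j\<in>UNIV. P $ i $ j) = 1)}"

text \<open>E = [I_n, ..., I_n]^T: row (s,a) is the s-th unit vector.\<close>
definition E_mat :: "real^'s::finite^('s \<times> 'a::finite)" where
  "E_mat = (\<chi> i j. if fst i = j then 1 else 0)"

definition hcat :: "real^'n^'m \<Rightarrow> real^'k^'m \<Rightarrow> real^('n + 'k)^'m" where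
  "hcat A B = (\<chi> i j. case j of Inl j' \<Rightarrow> A $ i $ j' | Inr j' \<Rightarrow> B $ i $ j')"

definition col_span :: "real^'n^'m \<Rightarrow> (real^'m) set" where
  "col_span A = span (columns A)"

end

theory Submission
  imports Defs
begin

lemma mv_E:
  fixes P :: "real^'s::finite^('s \<times> 'a::finite)"
  shows "((E_mat - \<gamma> *\<^sub>R P) *v x) $ i = x $ fst i - \<gamma> * (\<Sum>j\<in>UNIV. P$i$j * x$j)"
proof -
  have "((E_mat - \<gamma> *\<^sub>R P) *v x) $ i = (\<Sum>j\<in>UNIV. (if fst i = j then 1 else 0) * x$j - \<gamma> * (P$i$j * x$j))"
    by (simp add: matrix_vector_mult_def E_mat_def algebra_simps)
  also have "\<dots> = x $ fst i - \<gamma> * (\<Sum>j\<in>UNIV. P$i$j * x$j)"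
    by (simp add: sum_subtractf sum_distrib_left if_distrib[of "\<lambda>c. c * _"] cong: if_cong)
  finally show ?thesis .
qed

lemma colspan_range:
  fixes A :: "real^'n^'m"
  shows "col_span A = range ((*v) A)"
proof
  show "col_span A \<subseteq> range ((*v) A)"
    unfolding col_span_def
    by (rule span_minimal) (auto simp: columns_image_basis intro: linear_subspace_image[OF matrix_vector_mul_linear subspace_UNIV])
  show "range ((*v) A) \<subseteq> col_span A"
    unfolding col_span_def using matrix_vector_mult_in_columnspace by blast
qed

lemma columns_hcat: "columns (hcat A B) = columns A \<union> columns B"
proof -
  have c1: "column (Inl k) (hcat A B) = column k A" for k
    by (simp add: column_def hcat_def)
  have c2: "column (Inr k) (hcat A B) = column k B" for k
    by (simp add: column_def hcat_def)
  show ?thesis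
    unfolding columns_def
    apply (auto simp: c1[symmetric] c2[symmetric])
    subgoal for i by (cases i) (auto simp: c1 c2)
    done
qed

lemma maxlem:
  fixes Q :: "real^'s::finite^('s \<times> 'a::finite)" and z :: "real^'s"
  assumes Q: "Q \<in> stoch_mats" and g: "0 \<le> \<gamma>" "\<gamma> < 1"
    and eq: "\<And>s. z$s = \<gamma> * (\<Sum>j\<in>UNIV. Q$(s,a)$j * z$j)"
  shows "z = 0"
proof -
  define M where "M = Max (range (\<lambda>j. \<bar>z$j\<bar>))"
  obtain i where i: "\<bar>z$i\<bar> = M" unfolding M_def
    by (metis (mono_tags, lifting) Max_in UNIV_not_empty finite finite_imageI image_iff image_is_empty)
  have le: "\<bar>z$j\<bar> \<le> M" for j unfolding M_def by (simp add: Max_ge)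
  have "\<bar>(\<Sum>j\<in>UNIV. Q$(i,a)$j * z$j)\<bar> \<le> (\<Sum>j\<in>UNIV. Q$(i,a)$j * M)"
    apply (rule order_trans[OF sum_abs])
    apply (rule sum_mono)
    using Q le unfolding stoch_mats_def by (simp add: abs_mult mult_left_mono)
  also have "\<dots> = M" using Q unfolding stoch_mats_def by (simp add: sum_distrib_right[symmetric])
  finally have "M \<le> \<gamma> * M" using eq[of i] i g
    by (metis abs_mult abs_of_nonneg mult_left_mono)
  moreover have "0 \<le> M" using le[of i] by simp
  ultimately have "M = 0" using g by (smt (verit) mult_le_cancel_right1)
  thus ?thesis using le by (metis abs_le_zero_iff vec_eq_iff zero_index)
qed

lemma stoch_comb:
  fixes P R :: "real^'s::finite^('s \<times> 'a::finite)"
  assumes P: "P \<in> stoch_mats" and R: "R \<in> stoch_mats" and e: "0 \<le> e" "e \<le> 1"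
  shows "P + e *\<^sub>R (R - P) \<in> stoch_mats"
proof -
  have "0 \<le> P$i$j + e * (R$i$j - P$i$j)" for i j
  proof -
    have "P$i$j + e * (R$i$j - P$i$j) = (1-e) * P$i$j + e * R$i$j" by (simp add: algebra_simps)
    moreover have "0 \<le> P$i$j" "0 \<le> R$i$j" using P R unfolding stoch_mats_def by blast+
    ultimately show ?thesis using e by simp
  qed
  moreover have "(\<Sum>j\<in>UNIV. P$i$j + e * (R$i$j - P$i$j)) = 1" for i
  proof -
    have "(\<Sum>j\<in>UNIV. P$i$j) = 1" "(\<Sum>j\<in>UNIV. R$i$j) = 1" using P R unfolding stoch_mats_def by blast+
    thus ?thesis by (simp add: sum.distrib sum_subtractf sum_distrib_left[symmetric])
  qed
  ultimately show ?thesis unfolding stoch_mats_def by simp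
qed

lemma E_one:
  fixes P :: "real^'s::finite^('s \<times> 'a::finite)"
  assumes "P \<in> stoch_mats"
  shows "(E_mat - \<gamma> *\<^sub>R P) *v vec 1 = (1 - \<gamma>) *\<^sub>R vec 1"
  using assms unfolding stoch_mats_def by (simp add: vec_eq_iff mv_E)

lemma inj_A:
  fixes P :: "real^'s::finite^('s \<times> 'a::finite)"
  assumes P: "P \<in> stoch_mats" and g: "0 \<le> \<gamma>" "\<gamma> < 1"
  shows "inj ((*v) (E_mat - \<gamma> *\<^sub>R P))"
proof -
  have "x = 0" if "(E_mat - \<gamma> *\<^sub>R P) *v x = 0" for x
  proof (rule maxlem[OF P g, of x "undefined"])
    fix s
    have "((E_mat - \<gamma> *\<^sub>R P) *v x) $ (s, undefined) = 0" using that by simp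
    thus "x$s = \<gamma> * (\<Sum>j\<in>UNIV. P$(s,undefined)$j * x$j)" by (simp add: mv_E)
  qed
  thus ?thesis
    unfolding inj_def by (metis matrix_vector_mult_diff_distrib right_minus_eq)
qed

lemma dim_colspan:
  fixes P :: "real^'s::finite^('s \<times> 'a::finite)"
  assumes P: "P \<in> stoch_mats" and g: "0 \<le> \<gamma>" "\<gamma> < 1"
  shows "dim (col_span (E_mat - \<gamma> *\<^sub>R P)) = CARD('s)"
proof -
  have "dim (range ((*v) (E_mat - \<gamma> *\<^sub>R P))) = dim (UNIV :: (real^'s) set)"
    by (rule dim_image_eq[OF matrix_vector_mul_linear]) (use inj_A[OF P g] in \<open>simp add: inj_on_def inj_def\<close>)
  thus ?thesis by (simp add: colspan_range)
qed

lemma sum_comb: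
  fixes P R :: "real^'s::finite^('s \<times> 'a::finite)"
  shows "(\<Sum>j\<in>UNIV. (P + e *\<^sub>R (R - P))$i$j * x$j)
     = (\<Sum>j\<in>UNIV. P$i$j * x$j) + e * ((\<Sum>j\<in>UNIV. R$i$j * x$j) - (\<Sum>j\<in>UNIV. P$i$j * x$j))"
  by (simp add: algebra_simps sum.distrib sum_subtractf sum_distrib_left)

lemma two_elems:
  assumes "CARD('a::finite) \<ge> 2"
  shows "\<exists>a1 a2::'a. a1 \<noteq> a2"
proof -
  have "\<not> (\<forall>a b::'a. a = b)"
  proof
    assume h: "\<forall>a b::'a. a = b"
    then have "(UNIV::'a set) = {undefined}" by auto
    then have "CARD('a) = card {undefined::'a}" by (rule arg_cong)
    then show False using assms by simp
  qed
  thus ?thesis by blast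
qed

theorem mainTheorem16:
  fixes P0 :: "real^'s::finite^('s \<times> 'a::finite)"
    and N :: "(real^'s^('s \<times> 'a)) set"
    and \<gamma> :: real
  assumes "CARD('a) \<ge> 2"
    and "0 < \<gamma>" and "\<gamma> < 1"
    and "P0 \<in> stoch_mats"
    and "\<exists>U. open U \<and> P0 \<in> U \<and> U \<subseteq> N"
  shows "\<exists>P1 P2. P1 \<in> N \<inter> stoch_mats \<and> P2 \<in> N \<inter> stoch_mats \<and>
           rank (hcat (E_mat - \<gamma> *\<^sub>R P1) (E_mat - \<gamma> *\<^sub>R P2)) = 2 * CARD('s) - 1 \<and>
           col_span (E_mat - \<gamma> *\<^sub>R P1) \<inter> col_span (E_mat - \<gamma> *\<^sub>R P2)
             = span {vec 1}"
proof -
  note P0 = assms(4)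
  have g: "0 \<le> \<gamma>" "\<gamma> < 1" using assms(2,3) by auto
  obtain U where U: "open U" "P0 \<in> U" "U \<subseteq> N" using assms(5) by blast
  obtain r where r: "r > 0" "ball P0 r \<subseteq> U" using U open_contains_ball by blast
  obtain a1 a2 :: 'a where a12: "a1 \<noteq> a2" using two_elems[OF assms(1)] by blast
  define s0 :: 's where "s0 = undefined"
  define R1 :: "real^'s^('s \<times> 'a)" where
    "R1 = (\<chi> i j. if snd i = a2 then (if fst i = j then 1 else 0) else P0$i$j)"
  define R2 :: "real^'s^('s \<times> 'a)" where
    "R2 = (\<chi> i j. if snd i = a2 then (if j = s0 then 1 else 0) else P0$i$j)"
  have P0i: "0 \<le> P0$i$j" "(\<Sum>j\<in>UNIV. P0$i$j) = 1" for i j using P0 unfolding stoch_mats_def by blast+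
  have "(\<Sum>j\<in>UNIV. R1$i$j) = 1" for i
    unfolding R1_def using P0i(2)[of i] by (cases "snd i = a2") auto
  hence R1s: "R1 \<in> stoch_mats"
    unfolding stoch_mats_def using P0i(1) by (auto simp: R1_def)
  have "(\<Sum>j\<in>UNIV. R2$i$j) = 1" for i
    unfolding R2_def using P0i(2)[of i] by (cases "snd i = a2") auto
  hence R2s: "R2 \<in> stoch_mats"
    unfolding stoch_mats_def using P0i(1) by (auto simp: R2_def)
  define e where "e = min (1/2) (r / (norm (R1-P0) + norm (R2-P0) + 1))"
  have npos: "0 < norm (R1-P0) + norm (R2-P0) + 1"
    by (smt (verit) norm_ge_zero)
  have e0: "0 < e" "e \<le> 1" unfolding e_def using r npos by auto
  have eb: "e * norm (R1 - P0) < r" "e * norm (R2 - P0) < r"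
  proof -
    have "e \<le> r / (norm (R1-P0) + norm (R2-P0) + 1)" unfolding e_def by simp
    hence "e * (norm (R1-P0) + norm (R2-P0) + 1) \<le> r"
      using pos_le_divide_eq[OF npos] by blast
    moreover have "e * (norm (R1-P0) + norm (R2-P0) + 1) = e * norm (R1-P0) + e * norm (R2-P0) + e"
      by (simp add: distrib_left)
    moreover have "0 \<le> e * norm (R1-P0)" "0 \<le> e * norm (R2-P0)" using e0 by simp_all
    ultimately show "e * norm (R1 - P0) < r" "e * norm (R2 - P0) < r" using e0 by linarith+
  qed
  define P1 where "P1 = P0 + e *\<^sub>R (R1 - P0)"
  define P2 where "P2 = P0 + e *\<^sub>R (R2 - P0)"
  have P1s: "P1 \<in> stoch_mats" unfolding P1_def using stoch_comb[OF P0 R1s] e0 by simp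
  have P2s: "P2 \<in> stoch_mats" unfolding P2_def using stoch_comb[OF P0 R2s] e0 by simp
  have P1N: "P1 \<in> N"
  proof -
    have "dist P0 P1 < r" unfolding P1_def dist_norm using eb e0 by simp
    thus ?thesis using r U by auto
  qed
  have P2N: "P2 \<in> N"
  proof -
    have "dist P0 P2 < r" unfolding P2_def dist_norm using eb e0 by simp
    thus ?thesis using r U by auto
  qed
  define A1 where "A1 = E_mat - \<gamma> *\<^sub>R P1"
  define A2 where "A2 = E_mat - \<gamma> *\<^sub>R P2"
  have inter: "col_span A1 \<inter> col_span A2 = span {vec 1}"
  proof
    show "span {vec 1} \<subseteq> col_span A1 \<inter> col_span A2"
    proof (rule span_minimal)
      have "vec 1 = A1 *v ((1/(1-\<gamma>)) *\<^sub>R vec 1)" "vec 1 = A2 *v ((1/(1-\<gamma>)) *\<^sub>R vec 1)"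
        unfolding A1_def A2_def using g E_one[OF P1s, of \<gamma>] E_one[OF P2s, of \<gamma>]
        by (simp_all add: matrix_vector_mult_scaleR)
      thus "{vec 1} \<subseteq> col_span A1 \<inter> col_span A2" unfolding colspan_range by (metis Int_iff rangeI singletonD subsetI)
      show "subspace (col_span A1 \<inter> col_span A2)"
        unfolding col_span_def by (intro subspace_inter subspace_span)
    qed
  next
    show "col_span A1 \<inter> col_span A2 \<subseteq> span {vec 1}"
    proof
      fix v assume "v \<in> col_span A1 \<inter> col_span A2"
      then obtain x y where vx: "v = A1 *v x" and vy: "v = A2 *v y" unfolding colspan_range by blast
      have row: "x$s - \<gamma> * (\<Sum>j\<in>UNIV. P1$(s,a)$j * x$j) = y$s - \<gamma> * (\<Sum>j\<in>UNIV. P2$(s,a)$j * y$j)" for s a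
        using arg_cong[OF trans[OF vx[symmetric] vy], of "\<lambda>w. w $ (s,a)"] unfolding A1_def A2_def by (simp add: mv_E)
      have Pa1: "P1$(s,a1)$j = P0$(s,a1)$j" "P2$(s,a1)$j = P0$(s,a1)$j" for s j
        unfolding P1_def P2_def R1_def R2_def using a12 by auto
      have "x - y = 0"
      proof (rule maxlem[OF P0 g, of _ a1])
        fix s
        have "x$s - \<gamma> * (\<Sum>j\<in>UNIV. P0$(s,a1)$j * x$j) = y$s - \<gamma> * (\<Sum>j\<in>UNIV. P0$(s,a1)$j * y$j)"
          using row[of s a1] by (simp add: Pa1)
        thus "(x - y)$s = \<gamma> * (\<Sum>j\<in>UNIV. P0$(s,a1)$j * (x - y)$j)"
          by (simp add: algebra_simps sum_subtractf)
      qed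
      hence xy: "y = x" by simp
      have xs: "x$s = x$s0" for s
      proof -
        have d1: "(\<Sum>j\<in>UNIV. R1$(s,a2)$j * x$j) = x$s"
          unfolding R1_def by (simp add: if_distrib[of "\<lambda>c. c * _"] cong: if_cong)
        have d2: "(\<Sum>j\<in>UNIV. R2$(s,a2)$j * x$j) = x$s0"
          unfolding R2_def by (simp add: if_distrib[of "\<lambda>c. c * _"] cong: if_cong)
        have "\<gamma> * e * x$s = \<gamma> * e * x$s0"
          using row[of s a2] unfolding xy P1_def P2_def sum_comb d1 d2 by (simp add: algebra_simps) metis
        thus ?thesis using e0 assms(2) by simp
      qed
      have "x = x$s0 *\<^sub>R vec 1" using xs by (simp add: vec_eq_iff)
      hence "v = (x$s0 * (1 - \<gamma>)) *\<^sub>R vec 1"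
        unfolding vx A1_def by (metis E_one[OF P1s] matrix_vector_mult_scaleR scaleR_scaleR)
      thus "v \<in> span {vec 1}" by (simp add: span_base span_scale)
    qed
  qed
  have d1: "dim (col_span A1) = CARD('s)" unfolding A1_def by (rule dim_colspan[OF P1s g])
  have d2: "dim (col_span A2) = CARD('s)" unfolding A2_def by (rule dim_colspan[OF P2s g])
  have d3: "dim (span {vec 1 :: real^'s}) = 1"
    by (simp add: dim_span dim_insert)
  have "rank (hcat A1 A2) = dim {x + y |x y. x \<in> col_span A1 \<and> y \<in> col_span A2}"
    unfolding column_rank_def columns_hcat col_span_def span_Un[symmetric] by (simp add: dim_span)
  moreover have "dim {x + y |x y. x \<in> col_span A1 \<and> y \<in> col_span A2} + dim (col_span A1 \<inter> col_span A2)
      = dim (col_span A1) + dim (col_span A2)"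
    unfolding col_span_def by (intro dim_sums_Int subspace_span)
  ultimately have "rank (hcat A1 A2) = 2 * CARD('s) - 1" using inter d1 d2 d3 by simp
  thus ?thesis using inter P1s P2s P1N P2N unfolding A1_def A2_def by blast
qed

end
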